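(* For every integer $n\ge 1$, $$2^n\hat{A}_n(x)=\sum_{\sigma\in\mathfrak S_n}(1+x)^{\mathrm{dda}(\sigma)}\,2^{\mathrm{val}(\sigma)}\,(1+x^2)^{\mathrm{pk}(\sigma)},$$ where the statistics $\mathrm{dda},\mathrm{val},\mathrm{pk}$ are computed with the convention $\sigma(0)=\sigma(n+1)=n+1$; and $$\hat{B}_n(x)=\sum_{\sigma\in\mathfrak S_n}(1+x)^{\mathrm{dda}^0(\sigma)}\,2^{\mathrm{val}^0(\sigma)}\,(1+x^2)^{\mathrm{pk}^0(\sigma)},$$ where the statistics $\mathrm{dda}^0,\mathrm{val}^0,\mathrm{pk}^0$ are computed with the convention $\sigma(0)=0$, $\sigma(n+1)=n+1$.
   Context: $\mathfrak S_n$ is the symmetric group on $[n]=\{1,\dots,n\}$, permutations written as words $\sigma(1)\cdots\sigma(n)$. For $\sigma\in\mathfrak S_n$, an index $i\in[n-1]$ is an alternating descent of $\sigma$ if either $\sigma(i)>\sigma(i+1)$ and $i$ is odd, or $\sigma(i)<\sigma(i+1)$ and $i$ is even; $\hat d(\sigma)$ is the number of alternating descents and $\hat A_n(x)=\sum_{\sigma\in\mathfrak S_n}x^{\hat d(\sigma)}$. $\mathcal B_n$ is the set of signed permutations: bijections $\pi$ of $\{\pm1,\dots,\pm n\}$ with $\pi(-i)=-\pi(i)$, identified with the word $\pi(1)\cdots\pi(n)$, and always prepended with $\pi(0)=0$. An index $i\in\{0\}\cup[n-1]$ is an alternating descent of $\pi\in\mathcal B_n$ if either $\pi(i)<\pi(i+1)$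 and $i$ is even, or $\pi(i)>\pi(i+1)$ and $i$ is odd; $\hat d_B(\pi)$ is their number and $\hat B_n(x)=\sum_{\pi\in\mathcal B_n}x^{\hat d_B(\pi)}$. Given $\sigma\in\mathfrak S_n$ extended by values $\sigma(0)$ and $\sigma(n+1)$ (according to a stated convention), an index $i\in[n]$ is a double ascent if $\sigma(i-1)<\sigma(i)<\sigma(i+1)$, a double descent if $\sigma(i-1)>\sigma(i)>\sigma(i+1)$, a valley if $\sigma(i-1)>\sigma(i)<\sigma(i+1)$, and a peak if $\sigma(i-1)<\sigma(i)>\sigma(i+1)$. $\mathrm{val}$ and $\mathrm{pk}$ denote the numbers of valleys and peaks, and $\mathrm{dda}$ the number of double ascents plus double descents. *)

theory Defs
  imports "HOL-Combinatorics.Combinatorics"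
begin

text \<open>Permutations of [n] are functions nat => nat that permute {1..n}
  (identity elsewhere); sigma i is the i-th letter of the word.\<close>

definition perms :: "nat \<Rightarrow> (nat \<Rightarrow> nat) set" where
  "perms n = {\<sigma>. \<sigma> permutes {1..n}}"

definition altdes :: "nat \<Rightarrow> (nat \<Rightarrow> nat) \<Rightarrow> nat" where
  "altdes n \<sigma> = card {i \<in> {1..<n}.
      (\<sigma> i > \<sigma> (i+1) \<and> odd i) \<or> (\<sigma> i < \<sigma> (i+1) \<and> even i)}"

definition hatA :: "nat \<Rightarrow> 'a::comm_ring_1 \<Rightarrow> 'a" where
  "hatA n x = (\<Sum>\<sigma>\<in>perms n. x ^ altdes n \<sigma>)"

text \<open>Signed permutations: pi :: int => int permuting {-n..n} - {0}
  with pi(-i) = -pi(i); in particular pi(0) = 0.\<close>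

definition signed_perms :: "nat \<Rightarrow> (int \<Rightarrow> int) set" where
  "signed_perms n = {\<pi>. \<pi> permutes ({- int n..int n} - {0}) \<and> (\<forall>i. \<pi> (- i) = - \<pi> i)}"

definition altdesB :: "nat \<Rightarrow> (int \<Rightarrow> int) \<Rightarrow> nat" where
  "altdesB n \<pi> = card {i \<in> {0..<n}.
      (\<pi> (int i) < \<pi> (int i + 1) \<and> even i) \<or> (\<pi> (int i) > \<pi> (int i + 1) \<and> odd i)}"

definition hatB :: "nat \<Rightarrow> 'a::comm_ring_1 \<Rightarrow> 'a" where
  "hatB n x = (\<Sum>\<pi>\<in>signed_perms n. x ^ altdesB n \<pi>)"

definition ext :: "nat \<Rightarrow> nat \<Rightarrow> nat \<Rightarrow> (nat \<Rightarrow> nat) \<Rightarrow> nat \<Rightarrow> nat" where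
  "ext a b n \<sigma> i = (if i = 0 then a else if i = n + 1 then b else \<sigma> i)"

definition dda :: "nat \<Rightarrow> nat \<Rightarrow> nat \<Rightarrow> (nat \<Rightarrow> nat) \<Rightarrow> nat" where
  "dda a b n \<sigma> = card {i \<in> {1..n}.
      let e = ext a b n \<sigma> in
      (e (i-1) < e i \<and> e i < e (i+1)) \<or> (e (i-1) > e i \<and> e i > e (i+1))}"

definition val :: "nat \<Rightarrow> nat \<Rightarrow> nat \<Rightarrow> (nat \<Rightarrow> nat) \<Rightarrow> nat" where
  "val a b n \<sigma> = card {i \<in> {1..n}.
      let e = ext a b n \<sigma> in e (i-1) > e i \<and> e i < e (i+1)}"

definition pk :: "nat \<Rightarrow> nat \<Rightarrow> nat \<Rightarrow> (nat \<Rightarrow> nat) \<Rightarrow> nat" where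
  "pk a b n \<sigma> = card {i \<in> {1..n}.
      let e = ext a b n \<sigma> in e (i-1) < e i \<and> e i > e (i+1)}"

end

theory Submission imports Defs begin

lemma sum_pow_card:
  fixes x :: "'a::comm_ring_1"
  assumes "finite I" "finite V"
  shows "(\<Sum>T\<in>Pow V. x ^ card {i\<in>I. f i \<in> T}) = (\<Prod>v\<in>V. 1 + x ^ card {i\<in>I. f i = v})"
proof -
  have c: "card {i\<in>I. f i \<in> T} = (\<Sum>v\<in>T. card {i\<in>I. f i = v})" if "T \<subseteq> V" for T
  proof -
    have "{i\<in>I. f i \<in> T} = (\<Union>v\<in>T. {i\<in>I. f i = v})" by auto
    moreover have "finite T" using that assms finite_subset by blast
    moreover have "card (\<Union>v\<in>T. {i\<in>I. f i = v}) = (\<Sum>v\<in>T. card {i\<in>I. f i = v})"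
      using \<open>finite T\<close> assms by (intro card_UN_disjoint) auto
    ultimately show ?thesis by simp
  qed
  have "(\<Prod>v\<in>V. 1 + x ^ card {i\<in>I. f i = v}) = (\<Prod>v\<in>V. x ^ card {i\<in>I. f i = v} + 1)"
    by (simp add: add.commute)
  also have "\<dots> = (\<Sum>X\<in>Pow V. (\<Prod>v\<in>X. x ^ card {i\<in>I. f i = v}) * (\<Prod>v\<in>V-X. 1))"
    by (rule prod_add[OF assms(2)])
  also have "\<dots> = (\<Sum>T\<in>Pow V. x ^ card {i\<in>I. f i \<in> T})"
    by (rule sum.cong) (auto simp: c power_sum)
  finally show ?thesis ..
qed

definition Wd :: "(nat\<Rightarrow>nat) \<Rightarrow> nat set \<Rightarrow> nat \<Rightarrow> int" where
  "Wd \<sigma> T k = (if (\<sigma> k \<in> T) = odd k then int (\<sigma> k) else - int (\<sigma> k))"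

definition altZ :: "nat \<Rightarrow> nat \<Rightarrow> (nat \<Rightarrow> int) \<Rightarrow> nat" where
  "altZ lo n w = card {i\<in>{lo..<n}. (w i > w (Suc i) \<and> odd i) \<or> (w i < w (Suc i) \<and> even i)}"

definition NN :: "nat \<Rightarrow> nat \<Rightarrow> (nat\<Rightarrow>nat) \<Rightarrow> nat set \<Rightarrow> nat" where
  "NN lo n \<sigma> T = card {i\<in>{lo..<n}. max (\<sigma> i) (\<sigma> (Suc i)) \<in> T}"

lemma edge_lemma:
  fixes a b :: nat assumes "a \<noteq> b"
  shows "(max a b \<in> T) = (let wa = (if (a\<in>T) = odd i then int a else - int a);
      wb = (if (b\<in>T) = odd (Suc i) then int b else - int b) in
      (wa > wb \<and> odd i) \<or> (wa < wb \<and> even i))"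
  using assms by (cases "a < b"; cases "a \<in> T"; cases "b \<in> T"; cases "odd i") (auto simp: max_def)

lemma NN_altZ:
  assumes "inj \<sigma>"
  shows "NN lo n \<sigma> T = altZ lo n (Wd \<sigma> T)"
  unfolding NN_def altZ_def
proof (rule arg_cong[where f=card], rule Collect_cong)
  fix i
  have "\<sigma> i \<noteq> \<sigma> (Suc i)" using assms by (metis inj_eq n_not_Suc_n)
  from edge_lemma[OF this, of T i] show "(i \<in> {lo..<n} \<and> max (\<sigma> i) (\<sigma> (Suc i)) \<in> T) =
    (i \<in> {lo..<n} \<and> (Wd \<sigma> T (Suc i) < Wd \<sigma> T i \<and> odd i \<or> Wd \<sigma> T i < Wd \<sigma> T (Suc i) \<and> even i))"
    by (simp add: Wd_def Let_def)
qed

lemma perm_basic: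
  fixes \<sigma> :: "nat \<Rightarrow> nat"
  assumes "\<sigma> permutes {1..n}"
  shows "inj \<sigma>" "\<And>j. j \<in> {1..n} \<Longrightarrow> \<sigma> j \<in> {1..n}" "\<And>j. j \<notin> {1..n} \<Longrightarrow> \<sigma> j = j"
    "\<sigma> 0 = 0"
proof -
  show "inj \<sigma>" using assms by (rule permutes_inj)
  show "\<And>j. j \<in> {1..n} \<Longrightarrow> \<sigma> j \<in> {1..n}" using permutes_in_image[OF assms] by (simp only:)
  show "\<And>j. j \<notin> {1..n} \<Longrightarrow> \<sigma> j = j" using assms by (rule permutes_not_in)
  then show "\<sigma> 0 = 0" by (metis atLeastAtMost_iff not_one_le_zero)
qed

lemma prod_stats:
  fixes x :: "'a::comm_ring_1"
  assumes p: "\<sigma> permutes {1..n}" and a: "a \<notin> {1..n}" and b: "b \<notin> {1..n}"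
  shows "(\<Prod>j\<in>{1..n}. 1 + x ^ ((if ext a b n \<sigma> (j-1) < ext a b n \<sigma> j then 1 else 0)
        + (if ext a b n \<sigma> j > ext a b n \<sigma> (j+1) then 1 else 0)))
     = (1+x) ^ dda a b n \<sigma> * 2 ^ val a b n \<sigma> * (1+x^2) ^ pk a b n \<sigma>"
proof -
  define e where "e = ext a b n \<sigma>"
  note pb = perm_basic[OF p]
  have ej: "e j = \<sigma> j" if "j \<in> {1..n}" for j using that by (auto simp: e_def ext_def)
  have d1: "e (j-1) \<noteq> e j" if "j \<in> {1..n}" for j
  proof (cases "j = 1")
    case True then show ?thesis using a pb(2)[OF that] that by (auto simp: e_def ext_def)
  next
    case False
    then have "j - 1 \<in> {1..n}" "j - 1 \<noteq> j" using that by auto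
    then show ?thesis using ej that pb(1) by (metis inj_eq)
  qed
  have d2: "e j \<noteq> e (j+1)" if "j \<in> {1..n}" for j
  proof (cases "j = n")
    case True then show ?thesis using b pb(2)[OF that] that by (auto simp: e_def ext_def)
  next
    case False
    then have "j + 1 \<in> {1..n}" "j + 1 \<noteq> j" using that by auto
    then show ?thesis using ej that pb(1) by (metis inj_eq)
  qed
  define D where "D = {i \<in> {1..n}. (e (i-1) < e i \<and> e i < e (i+1)) \<or> (e (i-1) > e i \<and> e i > e (i+1))}"
  define V where "V = {i \<in> {1..n}. e (i-1) > e i \<and> e i < e (i+1)}"
  define P where "P = {i \<in> {1..n}. e (i-1) < e i \<and> e i > e (i+1)}"
  have dd: "dda a b n \<sigma> = card D" "val a b n \<sigma> = card V" "pk a b n \<sigma> = card P"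
    by (simp_all add: dda_def val_def pk_def D_def V_def P_def e_def Let_def)
  have un: "{1..n} = D \<union> V \<union> P"
  proof (intro equalityI subsetI)
    fix j assume j: "j \<in> {1..n}"
    have "e (j-1) < e j \<or> e (j-1) > e j" "e j < e (j+1) \<or> e j > e (j+1)"
      using d1[OF j] d2[OF j] by auto
    then show "j \<in> D \<union> V \<union> P" using j unfolding D_def V_def P_def by blast
  qed (auto simp: D_def V_def P_def)
  have fin: "finite D" "finite V" "finite P" by (auto simp: D_def V_def P_def)
  have dis: "D \<inter> V = {}" "(D \<union> V) \<inter> P = {}" by (auto simp: D_def V_def P_def)
  let ?m = "\<lambda>j. (if e (j-1) < e j then 1 else 0) + (if e j > e (j+1) then 1 else 0)"
  have "(\<Prod>j\<in>{1..n}. 1 + x ^ ?m j) = (\<Prod>j\<in>D. 1 + x ^ ?m j) * (\<Prod>j\<in>V. 1 + x ^ ?m j) * (\<Prod>j\<in>P. 1 + x ^ ?m j)"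
    unfolding un using fin dis by (simp add: prod.union_disjoint)
  also have "(\<Prod>j\<in>D. 1 + x ^ ?m j) = (\<Prod>j\<in>D. 1 + x)"
    by (rule prod.cong) (auto simp: D_def)
  also have "(\<Prod>j\<in>V. 1 + x ^ ?m j) = (\<Prod>j\<in>V. 2)"
    by (rule prod.cong) (auto simp: V_def)
  also have "(\<Prod>j\<in>P. 1 + x ^ ?m j) = (\<Prod>j\<in>P. 1 + x^2)"
    by (rule prod.cong) (auto simp: P_def power2_eq_square)
  finally show ?thesis unfolding dd e_def[symmetric] by simp
qed

lemma count_lemma:
  fixes \<sigma> :: "nat \<Rightarrow> nat"
  assumes p: "\<sigma> permutes {1..n}" and j: "j \<in> {1..n}" and lo: "lo \<le> 1"
  shows "card {i\<in>{lo..<n}. max (\<sigma> i) (\<sigma> (Suc i)) = \<sigma> j} =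
    (if lo \<le> j-1 \<and> \<sigma> (j-1) < \<sigma> j then 1 else 0) + (if j < n \<and> \<sigma> (Suc j) < \<sigma> j then 1 else 0)"
proof -
  note pb = perm_basic[OF p]
  have eq: "\<sigma> u = \<sigma> v \<longleftrightarrow> u = v" for u v using pb(1) by (meson inj_eq)
  have key: "max (\<sigma> i) (\<sigma> (Suc i)) = \<sigma> j \<longleftrightarrow> (i = j \<and> \<sigma> (Suc j) < \<sigma> j) \<or> (Suc i = j \<and> \<sigma> i < \<sigma> j)" for i
    using eq[of i j] eq[of "Suc i" j] eq[of i "Suc i"] by (auto simp: max_def)
  define c1 where "c1 = (lo \<le> j-1 \<and> \<sigma> (j-1) < \<sigma> j)"
  define c2 where "c2 = (j < n \<and> \<sigma> (Suc j) < \<sigma> j)"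
  have "{i\<in>{lo..<n}. max (\<sigma> i) (\<sigma> (Suc i)) = \<sigma> j} = (if c1 then {j-1} else {}) \<union> (if c2 then {j} else {})"
  proof (intro equalityI subsetI)
    fix i assume "i \<in> {i\<in>{lo..<n}. max (\<sigma> i) (\<sigma> (Suc i)) = \<sigma> j}"
    then have "i \<in> {lo..<n}" "(i = j \<and> \<sigma> (Suc j) < \<sigma> j) \<or> (Suc i = j \<and> \<sigma> i < \<sigma> j)" using key by auto
    then show "i \<in> (if c1 then {j-1} else {}) \<union> (if c2 then {j} else {})"
      unfolding c1_def c2_def by auto
  next
    fix i assume "i \<in> (if c1 then {j-1} else {}) \<union> (if c2 then {j} else {})"
    then have "(c1 \<and> i = j - 1) \<or> (c2 \<and> i = j)" by (auto split: if_splits)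
    then show "i \<in> {i\<in>{lo..<n}. max (\<sigma> i) (\<sigma> (Suc i)) = \<sigma> j}"
    proof
      assume "c1 \<and> i = j - 1"
      then have "i \<in> {lo..<n}" "Suc i = j \<and> \<sigma> i < \<sigma> j" using j unfolding c1_def by auto
      then show ?thesis using key by blast
    next
      assume "c2 \<and> i = j"
      then have "i \<in> {lo..<n}" "i = j \<and> \<sigma> (Suc j) < \<sigma> j" using j lo unfolding c2_def by auto
      then show ?thesis using key by blast
    qed
  qed
  moreover have "j - 1 \<noteq> j" using j by auto
  ultimately show ?thesis unfolding c1_def[symmetric] c2_def[symmetric] by auto
qed

lemma stats_sum:
  fixes x :: "'a::comm_ring_1" and \<sigma> :: "nat \<Rightarrow> nat"
  assumes p: "\<sigma> permutes {1..n}"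
    and c: "(lo = 1 \<and> a = n+1) \<or> (lo = 0 \<and> a = 0)"
  shows "(1+x) ^ dda a (n+1) n \<sigma> * 2 ^ val a (n+1) n \<sigma> * (1+x^2) ^ pk a (n+1) n \<sigma>
     = (\<Sum>T\<in>Pow {1..n}. x ^ NN lo n \<sigma> T)"
proof -
  note pb = perm_basic[OF p]
  let ?f = "\<lambda>i. max (\<sigma> i) (\<sigma> (Suc i))"
  have "(\<Sum>T\<in>Pow {1..n}. x ^ NN lo n \<sigma> T) = (\<Sum>T\<in>Pow {1..n}. x ^ card {i\<in>{lo..<n}. ?f i \<in> T})"
    by (simp add: NN_def)
  also have "\<dots> = (\<Prod>v\<in>{1..n}. 1 + x ^ card {i\<in>{lo..<n}. ?f i = v})"
    by (rule sum_pow_card) auto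
  also have "\<dots> = (\<Prod>j\<in>{1..n}. 1 + x ^ card {i\<in>{lo..<n}. ?f i = \<sigma> j})"
    by (rule prod.reindex_bij_betw[symmetric]) (rule permutes_imp_bij[OF p])
  also have "\<dots> = (\<Prod>j\<in>{1..n}. 1 + x ^ ((if ext a (n+1) n \<sigma> (j-1) < ext a (n+1) n \<sigma> j then 1 else 0)
        + (if ext a (n+1) n \<sigma> j > ext a (n+1) n \<sigma> (j+1) then 1 else 0)))"
  proof (rule prod.cong[OF refl])
    fix j assume j: "j \<in> {1..n}"
    have lo: "lo \<le> 1" using c by auto
    have sj: "\<sigma> j \<in> {1..n}" using pb(2)[OF j] .
    have e1: "(lo \<le> j-1 \<and> \<sigma> (j-1) < \<sigma> j) = (ext a (n+1) n \<sigma> (j-1) < ext a (n+1) n \<sigma> j)"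
    proof (cases "j = 1")
      case True then show ?thesis using c sj pb(4) by (auto simp: ext_def)
    next
      case False then show ?thesis using c j by (auto simp: ext_def)
    qed
    have e2: "(j < n \<and> \<sigma> (Suc j) < \<sigma> j) = (ext a (n+1) n \<sigma> j > ext a (n+1) n \<sigma> (j+1))"
      using j sj by (auto simp: ext_def)
    show "1 + x ^ card {i\<in>{lo..<n}. ?f i = \<sigma> j} = 1 + x ^ ((if ext a (n+1) n \<sigma> (j-1) < ext a (n+1) n \<sigma> j then 1 else 0)
        + (if ext a (n+1) n \<sigma> j > ext a (n+1) n \<sigma> (j+1) then 1 else 0))"
      unfolding count_lemma[OF p j lo] e1 e2 ..
  qed
  also have "\<dots> = (1+x) ^ dda a (n+1) n \<sigma> * 2 ^ val a (n+1) n \<sigma> * (1+x^2) ^ pk a (n+1) n \<sigma>"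
    by (rule prod_stats[OF p]) (use c in auto)
  finally show ?thesis ..
qed

lemma altZ_cong:
  assumes "\<And>k. k \<in> {lo..n} \<Longrightarrow> w k = w' k"
  shows "altZ lo n w = altZ lo n w'"
  unfolding altZ_def
proof (rule arg_cong[where f=card], rule Collect_cong)
  fix i show "(i \<in> {lo..<n} \<and> (w (Suc i) < w i \<and> odd i \<or> w i < w (Suc i) \<and> even i)) =
         (i \<in> {lo..<n} \<and> (w' (Suc i) < w' i \<and> odd i \<or> w' i < w' (Suc i) \<and> even i))"
    using assms[of i] assms[of "Suc i"] by auto
qed

definition Wc :: "nat set \<Rightarrow> (nat \<Rightarrow> nat) \<Rightarrow> nat \<Rightarrow> int" where
  "Wc C \<sigma> k = (if \<sigma> k \<in> C then - int (\<sigma> k) else int (\<sigma> k))"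

lemma enum_lemma:
  fixes x :: "'a::comm_ring_1"
  assumes C: "C \<subseteq> {1..n}"
  shows "(\<Sum>\<sigma>\<in>perms n. x ^ altZ 1 n (Wc C \<sigma>)) = (\<Sum>\<tau>\<in>perms n. x ^ altdes n \<tau>)"
proof -
  define sg where "sg v = (if v \<in> C then - int v else int v)" for v
  have abs_sg: "nat \<bar>sg v\<bar> = v" for v by (simp add: sg_def)
  define Vs where "Vs = sg ` {1..n}"
  have inj: "inj_on sg {1..n}" by (rule inj_onI) (metis abs_sg)
  have cV: "card Vs = n" unfolding Vs_def using card_image[OF inj] by simp
  obtain L where L: "sorted_wrt (<) L" "set L = Vs"
    using ex1_sorted_list_for_set_if_finite[of Vs] unfolding Vs_def by blast
  have lenL: "length L = n" using L cV distinct_card strict_sorted_iff by metis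
  define g where "g k = L ! (k - 1)" for k
  have gV: "g k \<in> Vs" if "k \<in> {1..n}" for k
  proof -
    have "k - 1 < length L" using that lenL by auto
    then show ?thesis unfolding g_def using L(2) nth_mem by blast
  qed
  have gmono: "g a < g b" if "a \<in> {1..n}" "b \<in> {1..n}" "a < b" for a b
    unfolding g_def using that lenL by (intro sorted_wrt_nth_less[OF L(1)]) auto
  have giff: "g a < g b \<longleftrightarrow> a < b" if "a \<in> {1..n}" "b \<in> {1..n}" for a b
    using gmono[OF that] gmono[OF that(2,1)] by (metis less_asym linorder_neqE_nat)
  define h where "h k = (if k \<in> {1..n} then nat \<bar>g k\<bar> else k)" for k
  have hg: "h k \<in> {1..n} \<and> sg (h k) = g k" if k: "k \<in> {1..n}" for k
  proof -
    obtain v where v: "v \<in> {1..n}" "g k = sg v" using gV[OF k] unfolding Vs_def by auto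
    then show ?thesis using k abs_sg[of v] by (simp add: h_def)
  qed
  have hinj: "inj_on h {1..n}"
  proof (rule inj_onI)
    fix a b assume a: "a \<in> {1..n}" and b: "b \<in> {1..n}" and "h a = h b"
    then have "g a = g b" using hg[OF a] hg[OF b] by metis
    then show "a = b" using giff[OF a b] giff[OF b a] by (metis linorder_neqE_nat less_irrefl)
  qed
  have himg: "h ` {1..n} = {1..n}"
    by (rule endo_inj_surj) (use hg hinj in auto)
  have hperm: "h permutes {1..n}"
  proof (rule bij_imp_permutes)
    show "bij_betw h {1..n} {1..n}" unfolding bij_betw_def using hinj himg by blast
  qed (auto simp: h_def)
  have "(\<Sum>\<sigma>\<in>perms n. x ^ altZ 1 n (Wc C \<sigma>)) = (\<Sum>\<tau>\<in>perms n. x ^ altZ 1 n (Wc C (h \<circ> \<tau>)))"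
    unfolding perms_def by (rule setum_permutations_compose_left[OF hperm])
  also have "\<dots> = (\<Sum>\<tau>\<in>perms n. x ^ altdes n \<tau>)"
  proof (rule sum.cong[OF refl])
    fix \<tau> assume "\<tau> \<in> perms n"
    then have tp: "\<tau> permutes {1..n}" by (simp add: perms_def)
    note tb = perm_basic[OF tp]
    have "altZ 1 n (Wc C (h \<circ> \<tau>)) = altZ 1 n (\<lambda>k. g (\<tau> k))"
    proof (rule altZ_cong)
      fix k assume "k \<in> {1..n}"
      then have "\<tau> k \<in> {1..n}" using tb(2) by blast
      then have "sg (h (\<tau> k)) = g (\<tau> k)" using hg by blast
      then show "Wc C (h \<circ> \<tau>) k = g (\<tau> k)" by (simp add: Wc_def sg_def split: if_splits)
    qed
    also have "\<dots> = altdes n \<tau>"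
      unfolding altZ_def altdes_def
    proof (rule arg_cong[where f=card], rule Collect_cong)
      fix i
      show "(i \<in> {1..<n} \<and> (g (\<tau> (Suc i)) < g (\<tau> i) \<and> odd i \<or> g (\<tau> i) < g (\<tau> (Suc i)) \<and> even i)) =
        (i \<in> {1..<n} \<and> (\<tau> (i + 1) < \<tau> i \<and> odd i \<or> \<tau> i < \<tau> (i + 1) \<and> even i))"
      proof (cases "i \<in> {1..<n}")
        case True
        then have "i \<in> {1..n}" "Suc i \<in> {1..n}" by auto
        then have "\<tau> i \<in> {1..n}" "\<tau> (Suc i) \<in> {1..n}" using tb(2) by auto
        then show ?thesis using giff by simp
      qed auto
    qed
    finally show "x ^ altZ 1 n (Wc C (h \<circ> \<tau>)) = x ^ altdes n \<tau>" by simp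
  qed
  finally show ?thesis .
qed

lemma partA2:
  fixes x :: "'a::comm_ring_1"
  shows "(\<Sum>\<sigma>\<in>perms n. \<Sum>T\<in>Pow {1..n}. x ^ NN 1 n \<sigma> T) = 2 ^ n * hatA n x"
proof -
  have inner: "(\<Sum>T\<in>Pow {1..n}. x ^ NN 1 n \<sigma> T) = (\<Sum>C\<in>Pow {1..n}. x ^ altZ 1 n (Wc C \<sigma>))"
    if sp: "\<sigma> \<in> perms n" for \<sigma>
  proof -
    have p: "\<sigma> permutes {1..n}" using sp by (simp add: perms_def)
    note pb = perm_basic[OF p]
    define \<phi> where "\<phi> T = {v\<in>{1..n}. (v \<in> T) \<noteq> odd (inv \<sigma> v)}" for T
    have "(\<Sum>T\<in>Pow {1..n}. x ^ NN 1 n \<sigma> T) = (\<Sum>T\<in>Pow {1..n}. x ^ altZ 1 n (Wc (\<phi> T) \<sigma>))"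
    proof (rule sum.cong[OF refl])
      fix T assume "T \<in> Pow {1..n}"
      have "NN 1 n \<sigma> T = altZ 1 n (Wd \<sigma> T)" by (rule NN_altZ[OF pb(1)])
      also have "\<dots> = altZ 1 n (Wc (\<phi> T) \<sigma>)"
      proof (rule altZ_cong)
        fix k assume k: "k \<in> {1..n}"
        have sk: "\<sigma> k \<in> {1..n}" using pb(2)[OF k] .
        have "inv \<sigma> (\<sigma> k) = k" using permutes_inverses(2)[OF p] .
        then show "Wd \<sigma> T k = Wc (\<phi> T) \<sigma> k" using sk by (auto simp: Wd_def Wc_def \<phi>_def)
      qed
      finally show "x ^ NN 1 n \<sigma> T = x ^ altZ 1 n (Wc (\<phi> T) \<sigma>)" by simp
    qed
    also have "\<dots> = (\<Sum>C\<in>Pow {1..n}. x ^ altZ 1 n (Wc C \<sigma>))"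
    proof (rule sum.reindex_bij_betw)
      show "bij_betw \<phi> (Pow {1..n}) (Pow {1..n})"
        by (rule bij_betwI[where g=\<phi>]) (auto simp: \<phi>_def)
    qed
    finally show ?thesis .
  qed
  have "(\<Sum>\<sigma>\<in>perms n. \<Sum>T\<in>Pow {1..n}. x ^ NN 1 n \<sigma> T)
      = (\<Sum>\<sigma>\<in>perms n. \<Sum>C\<in>Pow {1..n}. x ^ altZ 1 n (Wc C \<sigma>))"
    by (rule sum.cong[OF refl]) (rule inner)
  also have "\<dots> = (\<Sum>C\<in>Pow {1..n}. \<Sum>\<sigma>\<in>perms n. x ^ altZ 1 n (Wc C \<sigma>))"
    by (rule sum.swap)
  also have "\<dots> = (\<Sum>C\<in>Pow {1..n}. hatA n x)"
    by (rule sum.cong[OF refl]) (unfold hatA_def, rule enum_lemma, blast)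
  also have "\<dots> = 2 ^ n * hatA n x" by (simp add: card_Pow)
  finally show ?thesis .
qed

definition Phi :: "nat \<Rightarrow> (nat \<Rightarrow> nat) \<Rightarrow> nat set \<Rightarrow> int \<Rightarrow> int" where
  "Phi n \<sigma> T i = (if 1 \<le> i \<and> i \<le> int n then Wd \<sigma> T (nat i)
      else if - int n \<le> i \<and> i \<le> -1 then - Wd \<sigma> T (nat (-i)) else i)"

lemma Wd_abs:
  fixes \<sigma> :: "nat \<Rightarrow> nat"
  shows "\<bar>Wd \<sigma> T k\<bar> = int (\<sigma> k)"
  by (simp add: Wd_def)

lemma Phi_nat:
  fixes \<sigma> :: "nat \<Rightarrow> nat"
  assumes p: "\<sigma> permutes {1..n}" and k: "k \<le> n"
  shows "Phi n \<sigma> T (int k) = Wd \<sigma> T k"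
proof (cases "k = 0")
  case True then show ?thesis using perm_basic(4)[OF p] by (simp add: Phi_def Wd_def)
next
  case False then show ?thesis using k by (simp add: Phi_def)
qed

lemma Phi_odd: "Phi n \<sigma> T (- i) = - Phi n \<sigma> T i"
  by (simp add: Phi_def)

lemma Phi_S:
  fixes \<sigma> :: "nat \<Rightarrow> nat"
  assumes p: "\<sigma> permutes {1..n}" and i: "i \<in> {- int n..int n} - {0}"
  shows "Phi n \<sigma> T i \<in> {- int n..int n} - {0} \<and> nat \<bar>Phi n \<sigma> T i\<bar> = \<sigma> (nat \<bar>i\<bar>)"
proof -
  have k: "nat \<bar>i\<bar> \<in> {1..n}" using i by auto
  have s: "\<sigma> (nat \<bar>i\<bar>) \<in> {1..n}" using perm_basic(2)[OF p k] .
  have "\<bar>Phi n \<sigma> T i\<bar> = int (\<sigma> (nat \<bar>i\<bar>))"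
    using i by (cases "i \<ge> 1") (simp_all add: Phi_def Wd_abs)
  then show ?thesis using s by auto
qed

lemma Phi_signed:
  fixes \<sigma> :: "nat \<Rightarrow> nat"
  assumes p: "\<sigma> permutes {1..n}"
  shows "Phi n \<sigma> T \<in> signed_perms n"
proof -
  let ?S = "{- int n..int n} - {0}"
  let ?\<pi> = "Phi n \<sigma> T"
  note pb = perm_basic[OF p]
  have inj: "inj_on ?\<pi> ?S"
  proof (rule inj_onI)
    fix i j assume i: "i \<in> ?S" and j: "j \<in> ?S" and e: "?\<pi> i = ?\<pi> j"
    have "\<sigma> (nat \<bar>i\<bar>) = \<sigma> (nat \<bar>j\<bar>)" using Phi_S[OF p i, of T] Phi_S[OF p j, of T] e by metis
    then have "nat \<bar>i\<bar> = nat \<bar>j\<bar>" using pb(1) by (meson inj_eq)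
    then have "i = j \<or> i = - j" by (cases "i \<ge> 0"; cases "j \<ge> 0") auto
    moreover have "i \<noteq> - j"
    proof
      assume "i = - j"
      then have "?\<pi> i = - ?\<pi> j" using Phi_odd by metis
      then have "?\<pi> i = 0" using e by simp
      then show False using Phi_S[OF p i, of T] by simp
    qed
    ultimately show "i = j" by blast
  qed
  have img: "?\<pi> ` ?S = ?S"
    by (rule endo_inj_surj) (use inj Phi_S[OF p] in auto)
  have "?\<pi> permutes ?S"
  proof (rule bij_imp_permutes)
    show "bij_betw ?\<pi> ?S ?S" unfolding bij_betw_def using inj img by blast
  next
    fix i assume "i \<notin> ?S"
    then show "?\<pi> i = i" by (auto simp: Phi_def)
  qed
  then show ?thesis unfolding signed_perms_def using Phi_odd by blast
qed

lemma Phi_altdesB: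
  fixes \<sigma> :: "nat \<Rightarrow> nat"
  assumes p: "\<sigma> permutes {1..n}"
  shows "altdesB n (Phi n \<sigma> T) = NN 0 n \<sigma> T"
proof -
  have "altdesB n (Phi n \<sigma> T) = altZ 0 n (Wd \<sigma> T)"
    unfolding altdesB_def altZ_def
  proof (rule arg_cong[where f=card], rule Collect_cong)
    fix i
    show "(i \<in> {0..<n} \<and> (Phi n \<sigma> T (int i) < Phi n \<sigma> T (int i + 1) \<and> even i \<or>
        Phi n \<sigma> T (int i + 1) < Phi n \<sigma> T (int i) \<and> odd i)) =
      (i \<in> {0..<n} \<and> (Wd \<sigma> T (Suc i) < Wd \<sigma> T i \<and> odd i \<or> Wd \<sigma> T i < Wd \<sigma> T (Suc i) \<and> even i))"
    proof (cases "i < n")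
      case True
      have h1: "Phi n \<sigma> T (int i) = Wd \<sigma> T i" using Phi_nat[OF p, of i T] True by simp
      have h2: "Phi n \<sigma> T (int i + 1) = Wd \<sigma> T (Suc i)"
        using Phi_nat[OF p, of "Suc i" T] True by (simp add: add.commute)
      show ?thesis unfolding h1 h2 using True by auto
    qed auto
  qed
  also have "\<dots> = NN 0 n \<sigma> T" by (rule NN_altZ[symmetric, OF perm_basic(1)[OF p]])
  finally show ?thesis .
qed

lemma Phi_inj:
  "inj_on (\<lambda>p. Phi n (fst p) (snd p)) (perms n \<times> Pow {1..n})"
proof (rule inj_onI)
  fix a b
  assume A: "a \<in> perms n \<times> Pow {1..n}" and B: "b \<in> perms n \<times> Pow {1..n}"
    and E: "Phi n (fst a) (snd a) = Phi n (fst b) (snd b)"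
  obtain \<sigma> T where a: "a = (\<sigma>, T)" by (cases a)
  obtain \<sigma>' T' where b: "b = (\<sigma>', T')" by (cases b)
  have s: "\<sigma> \<in> perms n" and t: "T \<subseteq> {1..n}" and s': "\<sigma>' \<in> perms n" and t': "T' \<subseteq> {1..n}"
    and e: "Phi n \<sigma> T = Phi n \<sigma>' T'" using A B E a b by auto
  have p: "\<sigma> permutes {1..n}" and p': "\<sigma>' permutes {1..n}" using s s' by (auto simp: perms_def)
  have W: "Wd \<sigma> T k = Wd \<sigma>' T' k" if "k \<in> {1..n}" for k
    using Phi_nat[OF p, of k T] Phi_nat[OF p', of k T'] e that by auto
  have ss: "\<sigma> = \<sigma>'"
  proof
    fix k show "\<sigma> k = \<sigma>' k"
    proof (cases "k \<in> {1..n}")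
      case True
      then have "\<bar>Wd \<sigma> T k\<bar> = \<bar>Wd \<sigma>' T' k\<bar>" using W by simp
      then show ?thesis by (simp add: Wd_abs)
    next
      case False then show ?thesis using perm_basic(3)[OF p] perm_basic(3)[OF p'] by simp
    qed
  qed
  have "v \<in> T \<longleftrightarrow> v \<in> T'" if v: "v \<in> {1..n}" for v
  proof -
    define k where "k = inv \<sigma> v"
    have sk: "\<sigma> k = v" unfolding k_def using permutes_inverses(1)[OF p] .
    have k: "k \<in> {1..n}" unfolding k_def using v permutes_in_image[OF permutes_inv[OF p]] by blast
    have "Wd \<sigma> T k = Wd \<sigma> T' k" using W[OF k] ss by simp
    then show ?thesis using sk v by (auto simp: Wd_def split: if_splits)
  qed
  then have "T = T'" using t t' by blast
  with ss show "a = b" using a b by simp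
qed

lemma Phi_surj:
  assumes sp: "\<pi> \<in> signed_perms n"
  shows "\<exists>\<sigma> T. \<sigma> \<in> perms n \<and> T \<subseteq> {1..n} \<and> Phi n \<sigma> T = \<pi>"
proof -
  let ?S = "{- int n..int n} - {0}"
  have pp: "\<pi> permutes ?S" and od: "\<And>i. \<pi> (- i) = - \<pi> i" using sp by (auto simp: signed_perms_def)
  have piS: "\<pi> i \<in> ?S" if "i \<in> ?S" for i using permutes_in_image[OF pp] that by blast
  have pinj: "\<pi> a = \<pi> b \<longleftrightarrow> a = b" for a b using permutes_inj[OF pp] by (meson inj_eq)
  define \<sigma> where "\<sigma> k = (if k \<in> {1..n} then nat \<bar>\<pi> (int k)\<bar> else k)" for k
  have kS: "int k \<in> ?S" if "k \<in> {1..n}" for k using that by auto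
  have sin: "\<sigma> k \<in> {1..n}" if "k \<in> {1..n}" for k
    using piS[OF kS[OF that]] that by (auto simp: \<sigma>_def)
  have sinj: "inj_on \<sigma> {1..n}"
  proof (rule inj_onI)
    fix a b assume a: "a \<in> {1..n}" and b: "b \<in> {1..n}" and e: "\<sigma> a = \<sigma> b"
    then have "\<bar>\<pi> (int a)\<bar> = \<bar>\<pi> (int b)\<bar>" by (simp add: \<sigma>_def)
    then have "\<pi> (int a) = \<pi> (int b) \<or> \<pi> (int a) = \<pi> (- int b)" using od by (auto simp: abs_if split: if_splits)
    then have "int a = int b \<or> int a = - int b" using pinj by blast
    then show "a = b" using a b by auto
  qed
  have simg: "\<sigma> ` {1..n} = {1..n}" by (rule endo_inj_surj) (use sin sinj in auto)
  have p: "\<sigma> permutes {1..n}"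
  proof (rule bij_imp_permutes)
    show "bij_betw \<sigma> {1..n} {1..n}" unfolding bij_betw_def using sinj simg by blast
  qed (auto simp: \<sigma>_def)
  define T where "T = {v\<in>{1..n}. (\<pi> (int (inv \<sigma> v)) < 0) \<noteq> odd (inv \<sigma> v)}"
  have W: "Wd \<sigma> T k = \<pi> (int k)" if k: "k \<in> {1..n}" for k
  proof -
    have ik: "inv \<sigma> (\<sigma> k) = k" using permutes_inverses(2)[OF p] .
    have "\<sigma> k \<in> T \<longleftrightarrow> (\<pi> (int k) < 0) \<noteq> odd k" using sin[OF k] ik by (simp add: T_def)
    moreover have "\<pi> (int k) \<noteq> 0" using piS[OF kS[OF k]] by simp
    moreover have "int (\<sigma> k) = \<bar>\<pi> (int k)\<bar>" using k by (simp add: \<sigma>_def)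
    ultimately show ?thesis by (auto simp: Wd_def)
  qed
  have "Phi n \<sigma> T = \<pi>"
  proof
    fix i
    show "Phi n \<sigma> T i = \<pi> i"
    proof (cases "1 \<le> i \<and> i \<le> int n")
      case True
      then have "nat i \<in> {1..n}" by auto
      then show ?thesis using W[of "nat i"] True by (simp add: Phi_def)
    next
      case F1: False
      show ?thesis
      proof (cases "- int n \<le> i \<and> i \<le> -1")
        case True
        then have "nat (-i) \<in> {1..n}" by auto
        then have "Wd \<sigma> T (nat (-i)) = \<pi> (- i)" using W[of "nat (-i)"] True by simp
        then show ?thesis using F1 True od[of i] by (simp add: Phi_def)
      next
        case False
        then have "i \<notin> ?S" using F1 by auto
        then have "\<pi> i = i" using permutes_not_in[OF pp] by blast
        then show ?thesis by (subst Phi_def) (simp only: F1 False if_False)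
      qed
    qed
  qed
  moreover have "T \<subseteq> {1..n}" by (auto simp: T_def)
  ultimately show ?thesis using p by (auto simp: perms_def)
qed

lemma partB:
  fixes x :: "'a::comm_ring_1"
  shows "hatB n x = (\<Sum>\<sigma>\<in>perms n. \<Sum>T\<in>Pow {1..n}. x ^ NN 0 n \<sigma> T)"
proof -
  have bij: "bij_betw (\<lambda>p. Phi n (fst p) (snd p)) (perms n \<times> Pow {1..n}) (signed_perms n)"
    unfolding bij_betw_def
  proof
    show "inj_on (\<lambda>p. Phi n (fst p) (snd p)) (perms n \<times> Pow {1..n})" by (rule Phi_inj)
    show "(\<lambda>p. Phi n (fst p) (snd p)) ` (perms n \<times> Pow {1..n}) = signed_perms n"
    proof (intro equalityI subsetI)
      fix \<pi> assume "\<pi> \<in> (\<lambda>p. Phi n (fst p) (snd p)) ` (perms n \<times> Pow {1..n})"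
      then show "\<pi> \<in> signed_perms n" using Phi_signed by (auto simp: perms_def)
    next
      fix \<pi> assume "\<pi> \<in> signed_perms n"
      from Phi_surj[OF this] obtain \<sigma> T where "\<sigma> \<in> perms n" "T \<subseteq> {1..n}" "Phi n \<sigma> T = \<pi>" by blast
      then show "\<pi> \<in> (\<lambda>p. Phi n (fst p) (snd p)) ` (perms n \<times> Pow {1..n})"
        by (intro image_eqI[where x="(\<sigma>, T)"]) auto
    qed
  qed
  have "hatB n x = (\<Sum>\<pi>\<in>signed_perms n. x ^ altdesB n \<pi>)" by (simp add: hatB_def)
  also have "\<dots> = (\<Sum>p\<in>perms n \<times> Pow {1..n}. x ^ altdesB n (Phi n (fst p) (snd p)))"
    by (rule sum.reindex_bij_betw[OF bij, symmetric])
  also have "\<dots> = (\<Sum>p\<in>perms n \<times> Pow {1..n}. x ^ NN 0 n (fst p) (snd p))"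
    by (rule sum.cong[OF refl]) (auto simp: perms_def Phi_altdesB)
  also have "\<dots> = (\<Sum>\<sigma>\<in>perms n. \<Sum>T\<in>Pow {1..n}. x ^ NN 0 n \<sigma> T)"
    unfolding sum.cartesian_product by (simp add: case_prod_beta)
  finally show ?thesis .
qed

theorem theorem1p1:
  fixes n :: nat and x :: "'a::comm_ring_1"
  assumes "n \<ge> 1"
  shows "2 ^ n * hatA n x =
           (\<Sum>\<sigma>\<in>perms n. (1 + x) ^ dda (n+1) (n+1) n \<sigma> * 2 ^ val (n+1) (n+1) n \<sigma>
                              * (1 + x^2) ^ pk (n+1) (n+1) n \<sigma>)
       \<and> hatB n x =
           (\<Sum>\<sigma>\<in>perms n. (1 + x) ^ dda 0 (n+1) n \<sigma> * 2 ^ val 0 (n+1) n \<sigma>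
                              * (1 + x^2) ^ pk 0 (n+1) n \<sigma>)"
proof
  have "(\<Sum>\<sigma>\<in>perms n. (1 + x) ^ dda (n+1) (n+1) n \<sigma> * 2 ^ val (n+1) (n+1) n \<sigma>
                              * (1 + x^2) ^ pk (n+1) (n+1) n \<sigma>)
      = (\<Sum>\<sigma>\<in>perms n. \<Sum>T\<in>Pow {1..n}. x ^ NN 1 n \<sigma> T)"
    by (rule sum.cong[OF refl]) (rule stats_sum, auto simp: perms_def)
  then show "2 ^ n * hatA n x =
           (\<Sum>\<sigma>\<in>perms n. (1 + x) ^ dda (n+1) (n+1) n \<sigma> * 2 ^ val (n+1) (n+1) n \<sigma>
                              * (1 + x^2) ^ pk (n+1) (n+1) n \<sigma>)" using partA2[of x n] by simp
  have "(\<Sum>\<sigma>\<in>perms n. (1 + x) ^ dda 0 (n+1) n \<sigma> * 2 ^ val 0 (n+1) n \<sigma>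
                              * (1 + x^2) ^ pk 0 (n+1) n \<sigma>)
      = (\<Sum>\<sigma>\<in>perms n. \<Sum>T\<in>Pow {1..n}. x ^ NN 0 n \<sigma> T)"
    by (rule sum.cong[OF refl]) (rule stats_sum, auto simp: perms_def)
  then show "hatB n x =
           (\<Sum>\<sigma>\<in>perms n. (1 + x) ^ dda 0 (n+1) n \<sigma> * 2 ^ val 0 (n+1) n \<sigma>
                              * (1 + x^2) ^ pk 0 (n+1) n \<sigma>)" using partB by simp
qed

end
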